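(* Let $M=\sum_{n=1}^{\infty}\frac{2^{n-1}}{(3^{2/3})^n}=\frac{1}{3^{2/3}-2}$. Let the open intervals $J_n^k\subset[0,M]$ ($n\ge 1$, $1\le k\le 2^{n-1}$) and the set $A\subset[0,M]$ be constructed as follows: $J_1^1$ is the open interval of length $3^{-2/3}$ centered at the midpoint of $[0,M]$; for $n\ge 2$, the $2^{n-1}$ intervals $J_n^1,\dots,J_n^{2^{n-1}}$ are the open intervals of length $(3^{2/3})^{-n}$ centered at the midpoints of the $2^{n-1}$ connected components of $[0,M]\setminus(J_1\cup\dots\cup J_{n-1})$, where $J_m=\bigcup_{k=1}^{2^{m-1}}J_m^k$. (These intervals are pairwise disjoint.) Let $A=[0,M]\setminus\bigcup_{n\ge1}J_n$. Define $g:[0,M]\to\mathbb{R}$ by $g(x)=0$ for $x\in A$, and for $x\in J_n^k$, $$g(x)=\frac{4}{\mathcal{L}(J_n^k)^{1/2}}\,\mathrm{dist}(x,\partial J_n^k),$$ where $\mathcal{L}$ denotes Lebesgue measure (length). Then $g$ takes values in $[0,\infty)$ and: (1) $\max\{g(x): x\in J_n^k\}=2\,\mathcal{L}(J_n^k)^{1/2}$ for every $n,k$; (2) $g(x)=0$ if and only if $x\in A$; (3) $\int_{J_n^k}g(x)\,dx=\mathcal{L}(J_n^k)^{3/2}=\frac{1}{3^n}$ for every $n,k$, and $\int_0^M g(x)\,dx=1$; (4) $g$ is $\tfrac12$-Hölder continuous on $[0,M]$.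
   Context: $\mathcal{L}$ denotes one-dimensional Lebesgue measure; $\partial J$ denotes the set of endpoints of an interval $J$. *)

theory Defs
  imports "HOL-Analysis.Analysis"
begin

definition Mc :: real where
  "Mc = 1 / (3 powr (2/3) - 2)"

definition ell :: "nat \<Rightarrow> real" where
  "ell n = 1 / (3 powr (2/3)) ^ n"

definition Jfam :: "real set \<Rightarrow> nat \<Rightarrow> real set set" where
  "Jfam R n = (\<lambda>C. ball ((Inf C + Sup C) / 2) (ell n / 2)) ` components ({0..Mc} - R)"

primrec Removed :: "nat \<Rightarrow> real set" where
  "Removed 0 = {}"
| "Removed (Suc n) = Removed n \<union> \<Union> (Jfam (Removed n) (Suc n))"

definition Jset :: "nat \<Rightarrow> real set set" where
  "Jset n = Jfam (Removed (n - 1)) n"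

definition Aset :: "real set" where
  "Aset = {0..Mc} - (\<Union>n\<in>{1..}. \<Union> (Jset n))"

definition gfun :: "real \<Rightarrow> real" where
  "gfun x = (if \<exists>n\<ge>1. \<exists>J\<in>Jset n. x \<in> J
     then (let J = (SOME J. \<exists>n\<ge>1. J \<in> Jset n \<and> x \<in> J)
           in 4 / sqrt (measure lebesgue J) * infdist x (frontier J))
     else 0)"

definition holder_continuous_on :: "real \<Rightarrow> real set \<Rightarrow> (real \<Rightarrow> real) \<Rightarrow> bool" where
  "holder_continuous_on \<alpha> S f \<longleftrightarrow>
     (\<exists>C. \<forall>x\<in>S. \<forall>y\<in>S. \<bar>f x - f y\<bar> \<le> C * \<bar>x - y\<bar> powr \<alpha>)"

end

theory Submission
  imports Defs
begin

definition q :: real where "q = 3 powr (2/3)"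

lemma q_gt2: "q > 2"
proof -
  have "q ^ 3 = 9" unfolding q_def
    by (simp add: powr_realpow[symmetric] powr_powr)
  hence "2 ^ 3 < q ^ 3" by simp
  thus ?thesis by (rule power_less_imp_less_base) (simp add: q_def)
qed

lemma Mc_q: "Mc = 1 / (q - 2)" unfolding Mc_def q_def ..
lemma Mc_pos: "Mc > 0" using q_gt2 unfolding Mc_q by simp
lemma ell_q: "ell n = 1 / q ^ n" unfolding ell_def q_def ..
lemma ell_pos: "ell n > 0" using q_gt2 ell_q by simp

definition Ln :: "nat \<Rightarrow> real" where "Ln n = Mc / q ^ n"

lemma Ln_pos: "Ln n > 0" using q_gt2 Mc_pos Ln_def by simp

lemma Ln_step: "Ln n - ell (Suc n) = 2 * Ln (Suc n)"
proof -
  have qp: "q > 0" "q - 2 > 0" using q_gt2 by auto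
  have "Ln n - ell (Suc n) = (q * Mc - 1) / q ^ Suc n"
    using qp by (simp add: Ln_def ell_q field_simps)
  also have "q * Mc - 1 = 2 * Mc" using qp by (simp add: Mc_q field_simps)
  finally show ?thesis by (simp add: Ln_def)
qed

lemma components_family:
  fixes F :: "'a::topological_space set set"
  assumes fin: "finite F" and cl: "\<And>C. C \<in> F \<Longrightarrow> closed C \<and> connected C \<and> C \<noteq> {}"
    and dj: "\<And>C D. C \<in> F \<Longrightarrow> D \<in> F \<Longrightarrow> C \<noteq> D \<Longrightarrow> C \<inter> D = {}"
  shows "components (\<Union>F) = F"
proof -
  have key: "D \<subseteq> C" if C: "C \<in> F" and D: "connected D" "D \<subseteq> \<Union>F" "C \<inter> D \<noteq> {}" for C D
  proof (rule ccontr)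
    assume "\<not> D \<subseteq> C"
    let ?B = "\<Union>(F - {C})"
    have "closed ?B" using fin cl by (intro closed_Union) auto
    moreover have "closed C" using cl C by auto
    moreover have "D \<subseteq> C \<union> ?B" using D by auto
    moreover have "C \<inter> ?B \<inter> D = {}" using dj C by blast
    moreover have "?B \<inter> D \<noteq> {}" using \<open>\<not> D \<subseteq> C\<close> D by blast
    ultimately have "\<not> connected D" using \<open>C \<inter> D \<noteq> {}\<close> unfolding connected_closed
      by (simp only: not_not) (rule exI[of _ C], rule exI[of _ ?B], auto simp: Int_commute)
    thus False using D(1) by simp
  qed
  have inF: "C \<in> components (\<Union>F)" if "C \<in> F" for C
    unfolding in_components_maximal
  proof (intro conjI allI impI)
    show "C \<noteq> {}" "connected C" using cl that by auto
    show "C \<subseteq> \<Union>F" using that by auto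
    fix D assume D: "D \<noteq> {} \<and> C \<subseteq> D \<and> D \<subseteq> \<Union>F \<and> connected D"
    hence "C \<inter> D \<noteq> {}" using cl that by blast
    hence "D \<subseteq> C" using key[OF that] D by blast
    thus "D = C" using D by blast
  qed
  show ?thesis
  proof
    show "F \<subseteq> components (\<Union>F)" using inF by auto
    show "components (\<Union>F) \<subseteq> F"
    proof
      fix K assume K: "K \<in> components (\<Union>F)"
      then obtain x where "x \<in> K" using in_components_nonempty by blast
      then obtain C where C: "C \<in> F" "x \<in> C" using K in_components_subset by blast
      have "C \<in> components (\<Union>F)" using inF C by auto
      then have "C = K" using K components_eq C \<open>x \<in> K\<close> by blast
      thus "K \<in> F" using C by simp
    qed
  qed
qed

lemma mem_ball_real: "(x::real) \<in> ball c r \<longleftrightarrow> c - r < x \<and> x < c + r"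
  by (simp add: ball_eq_greaterThanLessThan)

definition Inv :: "nat \<Rightarrow> real set \<Rightarrow> bool" where
  "Inv n P \<longleftrightarrow> finite P \<and> card P = 2 ^ n \<and> (\<forall>a\<in>P. 0 \<le> a \<and> a + Ln n \<le> Mc)
     \<and> (\<forall>a\<in>P. \<forall>b\<in>P. a < b \<longrightarrow> a + Ln n < b)
     \<and> {0..Mc} - Removed n = (\<Union>a\<in>P. {a..a + Ln n})"

lemma Inv_components:
  assumes "Inv n P"
  shows "components ({0..Mc} - Removed n) = (\<lambda>a. {a..a + Ln n}) ` P"
proof -
  have "components (\<Union>((\<lambda>a. {a..a + Ln n}) ` P)) = (\<lambda>a. {a..a + Ln n}) ` P"
  proof (rule components_family)
    show "finite ((\<lambda>a. {a..a + Ln n}) ` P)" using assms Inv_def by auto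
    show "closed C \<and> connected C \<and> C \<noteq> {}" if "C \<in> (\<lambda>a. {a..a + Ln n}) ` P" for C
      using that Ln_pos[of n] by auto
    show "C \<inter> D = {}" if CD: "C \<in> (\<lambda>a. {a..a + Ln n}) ` P" "D \<in> (\<lambda>a. {a..a + Ln n}) ` P" "C \<noteq> D" for C D
    proof -
      obtain a where a: "a \<in> P" "C = {a..a + Ln n}" using CD(1) by blast
      obtain b where b: "b \<in> P" "D = {b..b + Ln n}" using CD(2) by blast
      note ab = a(1) b(1) a(2) b(2)
      have "a < b \<or> b < a" using ab CD by auto
      thus ?thesis using assms ab unfolding Inv_def by force
    qed
  qed
  thus ?thesis using assms unfolding Inv_def by simp
qed

lemma Jfam_Inv:
  assumes "Inv n P"
  shows "Jfam (Removed n) m = (\<lambda>a. ball (a + Ln n / 2) (ell m / 2)) ` P"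
proof -
  have "(\<lambda>C. ball ((Inf C + Sup C) / 2) (ell m / 2)) ` ((\<lambda>a. {a..a + Ln n}) ` P)
       = (\<lambda>a. ball (a + Ln n / 2) (ell m / 2)) ` P"
    unfolding image_image using Ln_pos[of n] by (intro image_cong refl) (simp add: field_simps)
  thus ?thesis unfolding Jfam_def Inv_components[OF assms] .
qed

lemma Inv_exists: "\<exists>P. Inv n P"
proof (induction n)
  case 0
  have "Inv 0 {0}" unfolding Inv_def Ln_def by simp
  thus ?case by blast
next
  case (Suc n)
  then obtain P where P: "Inv n P" by blast
  define L where "L = Ln n"
  define L' where "L' = Ln (Suc n)"
  define e where "e = ell (Suc n)"
  define d where "d = L - L'"
  have Le: "L = 2 * L' + e" using Ln_step[of n] unfolding L_def L'_def e_def by simp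
  have pos: "L' > 0" "e > 0" using Ln_pos ell_pos unfolding L'_def e_def by auto
  define P' where "P' = P \<union> (\<lambda>a. a + d) ` P"
  have fin: "finite P" and cardP: "card P = 2 ^ n" and rng: "\<forall>a\<in>P. 0 \<le> a \<and> a + L \<le> Mc"
    and sep: "\<forall>a\<in>P. \<forall>b\<in>P. a < b \<longrightarrow> a + L < b"
    and Rem: "{0..Mc} - Removed n = (\<Union>a\<in>P. {a..a + L})"
    using P unfolding Inv_def L_def by auto
  have disj: "P \<inter> (\<lambda>a. a + d) ` P = {}"
  proof (rule ccontr)
    assume "P \<inter> (\<lambda>a. a + d) ` P \<noteq> {}"
    then obtain a where a: "a \<in> P" "a + d \<in> P" by auto
    have "a < a + d" using Le pos d_def by simp
    hence "a + L < a + d" using sep a by blast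
    thus False using pos d_def by simp
  qed
  have "card P' = card P + card ((\<lambda>a. a + d) ` P)"
    unfolding P'_def using fin disj by (intro card_Un_disjoint) auto
  also have "card ((\<lambda>a. a + d) ` P) = card P" by (intro card_image) (simp add: inj_on_def)
  finally have card': "card P' = 2 ^ Suc n" using cardP by simp
  have rng': "\<forall>a\<in>P'. 0 \<le> a \<and> a + L' \<le> Mc"
    using rng pos Le unfolding P'_def d_def by force
  have sep': "\<forall>a\<in>P'. \<forall>b\<in>P'. a < b \<longrightarrow> a + L' < b"
  proof (intro ballI impI)
    fix x y assume xy: "x \<in> P'" "y \<in> P'" "x < y"
    obtain a where a: "a \<in> P" "x = a \<or> x = a + d" using xy P'_def by auto
    obtain b where b: "b \<in> P" "y = b \<or> y = b + d" using xy P'_def by auto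
    have "a < b \<or> a = b \<or> b < a" by auto
    thus "x + L' < y"
    proof (elim disjE)
      assume "a < b" hence "a + L < b" using sep a b by blast
      thus ?thesis using a b xy pos Le d_def by auto
    next
      assume "b < a" hence "b + L < a" using sep a b by blast
      thus ?thesis using a b xy pos Le d_def by auto
    next
      assume "a = b" thus ?thesis using a b xy pos Le d_def by auto
    qed
  qed
  have J: "Jfam (Removed n) (Suc n) = (\<lambda>a. ball (a + L / 2) (e / 2)) ` P"
    using Jfam_Inv[OF P] unfolding L_def e_def .
  have "{0..Mc} - Removed (Suc n) = ({0..Mc} - Removed n) - (\<Union>b\<in>P. ball (b + L / 2) (e / 2))"
    using J by auto
  also have "\<dots> = (\<Union>a\<in>P. {a..a + L}) - (\<Union>b\<in>P. ball (b + L / 2) (e / 2))"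
    using Rem by simp
  also have "\<dots> = (\<Union>a\<in>P'. {a..a + L'})"
  proof (rule set_eqI)
    fix x
    show "x \<in> (\<Union>a\<in>P. {a..a + L}) - (\<Union>b\<in>P. ball (b + L / 2) (e / 2))
       \<longleftrightarrow> x \<in> (\<Union>a\<in>P'. {a..a + L'})" (is "?l \<longleftrightarrow> ?r")
    proof
      assume ?l
      then obtain a where a: "a \<in> P" "a \<le> x" "x \<le> a + L" and nb: "\<forall>b\<in>P. x \<notin> ball (b + L / 2) (e / 2)"
        by auto
      have "\<not> (a + L/2 - e/2 < x \<and> x < a + L/2 + e/2)" using nb[rule_format, OF a(1)] unfolding mem_ball_real by simp
      hence "x \<le> a + L' \<or> a + d \<le> x" using Le d_def by linarith
      thus ?r using a Le d_def unfolding P'_def by auto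
    next
      assume ?r
      then obtain a where a: "a \<in> P" "(a \<le> x \<and> x \<le> a + L') \<or> (a + d \<le> x \<and> x \<le> a + d + L')"
        unfolding P'_def by auto
      have ax: "a \<le> x" "x \<le> a + L" using a(2) pos Le d_def by auto
      have "x \<notin> ball (b + L / 2) (e / 2)" if b: "b \<in> P" for b
      proof -
        have "a < b \<or> a = b \<or> b < a" by auto
        thus ?thesis
        proof (elim disjE)
          assume "a < b" hence "a + L < b" using sep a b by blast
          thus ?thesis using ax a(2) pos Le d_def unfolding mem_ball_real by linarith
        next
          assume "b < a" hence "b + L < a" using sep a b by blast
          thus ?thesis using ax a(2) pos Le d_def unfolding mem_ball_real by linarith
        next
          assume "a = b" thus ?thesis using ax a(2) pos Le d_def unfolding mem_ball_real by linarith
        qed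
      qed
      moreover have "a \<le> x \<and> x \<le> a + L" using a pos Le d_def by auto
      ultimately show ?l using a by auto
    qed
  qed
  finally have "Inv (Suc n) P'" unfolding Inv_def using fin card' rng' sep' P'_def
    unfolding L'_def by auto
  thus ?case by blast
qed

definition tent :: "real \<Rightarrow> real \<Rightarrow> real \<Rightarrow> real" where
  "tent c r x = (if x \<in> ball c r then 4 / sqrt (2 * r) * (r - \<bar>x - c\<bar>) else 0)"

lemma tent_max: "r > 0 \<Longrightarrow> tent c r x = 4 / sqrt (2 * r) * max 0 (r - \<bar>x - c\<bar>)"
  unfolding tent_def mem_ball_real by auto

lemma tent_nonneg: "r > 0 \<Longrightarrow> tent c r x \<ge> 0"
  unfolding tent_max by simp

lemma tent_pos: "r > 0 \<Longrightarrow> x \<in> ball c r \<Longrightarrow> tent c r x > 0"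
  unfolding tent_def mem_ball_real by auto

lemma tent_le: assumes "r > 0" shows "tent c r x \<le> 2 * sqrt (2 * r)"
proof -
  define s where "s = sqrt (2 * r)"
  have s: "s > 0" "s * s = 2 * r" using assms unfolding s_def by auto
  have "tent c r x \<le> 4 / s * r" unfolding tent_max[OF assms] s_def[symmetric]
    using s assms by (intro mult_left_mono) auto
  also have "4 / s * r = 2 * s" using s by (simp add: field_simps)
  finally show ?thesis unfolding s_def .
qed

lemma tent_center: assumes "r > 0" shows "tent c r c = 2 * sqrt (2 * r)"
proof -
  define s where "s = sqrt (2 * r)"
  have s: "s > 0" "s * s = 2 * r" using assms unfolding s_def by auto
  have "tent c r c = 4 / s * r" unfolding tent_max[OF assms] s_def[symmetric] using assms by simp
  also have "4 / s * r = 2 * s" using s by (simp add: field_simps)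
  finally show ?thesis unfolding s_def .
qed

lemma tent_holder: assumes "r > 0" shows "\<bar>tent c r x - tent c r y\<bar> \<le> 4 * sqrt \<bar>x - y\<bar>"
proof -
  define s where "s = sqrt (2 * r)"
  define t where "t = sqrt \<bar>x - y\<bar>"
  have s: "s > 0" "s * s = 2 * r" using assms unfolding s_def by auto
  have t: "t \<ge> 0" "t * t = \<bar>x - y\<bar>" unfolding t_def by auto
  define m where "m = (\<lambda>z. max 0 (r - \<bar>z - c\<bar>))"
  have m1: "\<bar>m x - m y\<bar> \<le> \<bar>x - y\<bar>" unfolding m_def by (auto simp: abs_real_def max_def)
  have m2: "\<bar>m x - m y\<bar> \<le> r" unfolding m_def using assms by (auto simp: abs_real_def max_def)
  have "tent c r x - tent c r y = 4 / s * (m x - m y)"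
    unfolding tent_max[OF assms] m_def s_def[symmetric] by (simp add: right_diff_distrib)
  hence "\<bar>tent c r x - tent c r y\<bar> = \<bar>4 / s\<bar> * \<bar>m x - m y\<bar>"
    by (simp only: abs_mult)
  also have "\<bar>4 / s\<bar> = 4 / s" using s by simp
  finally have "\<bar>tent c r x - tent c r y\<bar> = 4 / s * \<bar>m x - m y\<bar>" .
  also have "\<dots> \<le> 4 / s * (s * t)"
  proof (intro mult_left_mono)
    show "\<bar>m x - m y\<bar> \<le> s * t"
    proof (cases "t \<le> s")
      case True
      have "t * t \<le> s * t" using True t by (intro mult_right_mono) auto
      thus ?thesis using m1 t by linarith
    next
      case False
      have "s * s \<le> s * t" using False s by (intro mult_left_mono) auto
      thus ?thesis using m2 s by linarith
    qed
  qed (use s in auto)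
  also have "\<dots> = 4 * t" using s by simp
  finally show ?thesis unfolding t_def .
qed

lemma tent_integral_Icc:
  assumes "r > 0"
  shows "(tent c r has_integral (2 * r) powr (3/2)) {c - r..c + r}"
proof -
  define k where "k = 4 / sqrt (2 * r)"
  have i1: "((\<lambda>x. k * (x - c + r)) has_integral (k * r^2 / 2)) {c - r..c}"
  proof -
    have "((\<lambda>x. k * (x - c + r)) has_integral ((\<lambda>x. k * (x - c + r)^2 / 2) c - (\<lambda>x. k * (x - c + r)^2 / 2) (c - r))) {c - r..c}"
      using assms
      by (intro fundamental_theorem_of_calculus)
         (auto intro!: derivative_eq_intros simp: has_real_derivative_iff_has_vector_derivative[symmetric])
    thus ?thesis by (simp add: power2_eq_square)
  qed
  have i2: "((\<lambda>x. k * (c + r - x)) has_integral (k * r^2 / 2)) {c..c + r}"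
  proof -
    have "((\<lambda>x. k * (c + r - x)) has_integral ((\<lambda>x. - k * (c + r - x)^2 / 2) (c + r) - (\<lambda>x. - k * (c + r - x)^2 / 2) c)) {c..c + r}"
      using assms
      by (intro fundamental_theorem_of_calculus)
         (auto intro!: derivative_eq_intros simp: has_real_derivative_iff_has_vector_derivative[symmetric] field_simps)
    thus ?thesis by (simp add: power2_eq_square)
  qed
  have i1': "(tent c r has_integral (k * r^2 / 2)) {c - r..c}"
    using i1 by (rule has_integral_eq[rotated]) (use assms in \<open>auto simp: tent_max k_def abs_real_def max_def\<close>)
  have i2': "(tent c r has_integral (k * r^2 / 2)) {c..c + r}"
    using i2 by (rule has_integral_eq[rotated]) (use assms in \<open>auto simp: tent_max k_def abs_real_def max_def\<close>)
  have "(tent c r has_integral (k * r^2 / 2 + k * r^2 / 2)) {c - r..c + r}"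
    using assms by (intro has_integral_combine[OF _ _ i1' i2']) auto
  moreover have "k * r^2 / 2 + k * r^2 / 2 = (2 * r) powr (3/2)"
  proof -
    define s where "s = sqrt (2 * r)"
    have s: "s > 0" "s * s = 2 * r" using assms unfolding s_def by auto
    have "(2 * r) powr (3/2) = (2 * r) powr (1 + 1/2)" by simp
    also have "\<dots> = (2 * r) powr 1 * (2 * r) powr (1/2)" by (rule powr_add)
    also have "\<dots> = 2 * r * s" using assms by (simp add: s_def powr_half_sqrt)
    finally have "(2 * r) powr (3/2) = 2 * r * s" .
    moreover have "k * r^2 / 2 + k * r^2 / 2 = 2 * r * s"
      unfolding k_def s_def[symmetric] using s
      by (simp add: field_simps power2_eq_square)
    ultimately show ?thesis by simp
  qed
  ultimately show ?thesis by simp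
qed

lemma tent_integral_ball:
  assumes "r > 0"
  shows "(tent c r has_integral (2 * r) powr (3/2)) (ball c r)"
  using tent_integral_Icc[OF assms] unfolding has_integral_Icc_iff_Ioo ball_eq_greaterThanLessThan .

lemma measure_ball_real: "r > 0 \<Longrightarrow> measure lebesgue (ball (c::real) r) = 2 * r"
  unfolding ball_eq_greaterThanLessThan by (simp add: measure_completion)

lemma infdist_frontier_ball:
  assumes "r > 0" "x \<in> ball c r"
  shows "infdist x (frontier (ball c r)) = r - \<bar>x - (c::real)\<bar>"
proof -
  have "sphere c r = {c - r} \<union> {c + r}" using assms by (auto simp: dist_real_def)
  hence "infdist x (frontier (ball c r)) = infdist x ({c - r} \<union> {c + r})"
    using assms by (simp only: frontier_ball)
  also have "\<dots> = min (dist x (c - r)) (dist x (c + r))" by (subst infdist_Un_min) auto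
  finally have "infdist x (frontier (ball c r)) = min (dist x (c - r)) (dist x (c + r))" .
  thus ?thesis using assms unfolding mem_ball_real by (auto simp: dist_real_def)
qed

definition Pn :: "nat \<Rightarrow> real set" where "Pn n = (SOME P. Inv n P)"

lemma Inv_Pn: "Inv n (Pn n)"
  unfolding Pn_def using Inv_exists by (rule someI_ex)

lemma Pn_facts:
  shows "finite (Pn n)" "card (Pn n) = 2 ^ n" "\<And>a. a \<in> Pn n \<Longrightarrow> 0 \<le> a \<and> a + Ln n \<le> Mc"
    "\<And>a b. a \<in> Pn n \<Longrightarrow> b \<in> Pn n \<Longrightarrow> a < b \<Longrightarrow> a + Ln n < b"
    "{0..Mc} - Removed n = (\<Union>a\<in>Pn n. {a..a + Ln n})"
  using Inv_Pn[of n] unfolding Inv_def by auto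

lemma Jset_Suc: "Jset (Suc m) = (\<lambda>a. ball (a + Ln m / 2) (ell (Suc m) / 2)) ` Pn m"
  unfolding Jset_def using Jfam_Inv[OF Inv_Pn] by simp

lemma Ln_split: "Ln m = 2 * Ln (Suc m) + ell (Suc m)"
  using Ln_step[of m] by simp

lemma ball_sub: "ball (a + Ln m / 2) (ell (Suc m) / 2) \<subseteq> {a..a + Ln m}"
proof
  fix x assume "x \<in> ball (a + Ln m / 2) (ell (Suc m) / 2)"
  hence "a + Ln m / 2 - ell (Suc m) / 2 < x" "x < a + Ln m / 2 + ell (Suc m) / 2"
    by (simp_all only: mem_ball_real)
  thus "x \<in> {a..a + Ln m}" unfolding atLeastAtMost_iff using Ln_split[of m] Ln_pos[of "Suc m"]
    by (intro conjI; linarith)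
qed

lemma Jset_sub_Comp: "J \<in> Jset (Suc m) \<Longrightarrow> J \<subseteq> {0..Mc} - Removed m"
  unfolding Jset_Suc Pn_facts(5) using ball_sub by blast

lemma Jset_sub_Removed: "J \<in> Jset (Suc m) \<Longrightarrow> J \<subseteq> Removed (Suc m)"
  unfolding Jset_def by auto

lemma Removed_mono: "m \<le> n \<Longrightarrow> Removed m \<subseteq> Removed n"
  by (induction n) (auto simp: le_Suc_eq)

lemma same_level:
  assumes "a \<in> Pn m" "b \<in> Pn m" "x \<in> ball (a + Ln m / 2) (ell (Suc m) / 2)"
    "x \<in> ball (b + Ln m / 2) (ell (Suc m) / 2)"
  shows "a = b"
proof (rule ccontr)
  assume "a \<noteq> b"
  hence "a < b \<or> b < a" by auto
  hence "a + Ln m < b \<or> b + Ln m < a" using Pn_facts(4) assms by blast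
  thus False using ball_sub[of a m] ball_sub[of b m] assms(3,4) by force
qed

lemma Jdisj_aux:
  assumes "x \<in> J" "J \<in> Jset n" "x \<in> J'" "J' \<in> Jset n'" "1 \<le> n" "n < n'"
  shows False
proof -
  obtain m' where m': "n' = Suc m'" using assms by (cases n') auto
  have "J \<subseteq> Removed n" using Jset_sub_Removed assms by (cases n) auto
  also have "Removed n \<subseteq> Removed m'" using assms m' by (intro Removed_mono) auto
  finally have "x \<in> Removed m'" using assms by auto
  moreover have "x \<notin> Removed m'" using Jset_sub_Comp[of J' m'] assms m' by auto
  ultimately show False by blast
qed

lemma Jdisj:
  assumes "x \<in> J" "J \<in> Jset n" "x \<in> J'" "J' \<in> Jset n'" "1 \<le> n" "1 \<le> n'"
  shows "n = n' \<and> J = J'"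
proof -
  have "n = n'" using Jdisj_aux[of x J n J' n'] Jdisj_aux[of x J' n' J n] assms
    by (metis linorder_neqE_nat)
  moreover obtain m where m: "n = Suc m" using assms by (cases n) auto
  ultimately have "J \<in> (\<lambda>a. ball (a + Ln m / 2) (ell (Suc m) / 2)) ` Pn m"
    "J' \<in> (\<lambda>a. ball (a + Ln m / 2) (ell (Suc m) / 2)) ` Pn m"
    using assms Jset_Suc by auto
  then obtain a b where "a \<in> Pn m" "b \<in> Pn m" "J = ball (a + Ln m / 2) (ell (Suc m) / 2)"
    "J' = ball (b + Ln m / 2) (ell (Suc m) / 2)" by blast
  with same_level[of a m b x] assms \<open>n = n'\<close> show ?thesis by auto
qed

lemma Jset_finite: "finite (Jset n)"
  unfolding Jset_def Jfam_Inv[OF Inv_Pn] using Pn_facts(1) by simp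

lemma Jset_card: "card (Jset (Suc m)) = 2 ^ m"
proof -
  have "inj_on (\<lambda>a. ball (a + Ln m / 2) (ell (Suc m) / 2)) (Pn m)"
  proof (rule inj_onI)
    fix a b assume ab: "a \<in> Pn m" "b \<in> Pn m"
      "ball (a + Ln m / 2) (ell (Suc m) / 2) = ball (b + Ln m / 2) (ell (Suc m) / 2)"
    have h: "a + Ln m / 2 \<in> ball (a + Ln m / 2) (ell (Suc m) / 2)" using ell_pos[of "Suc m"] by simp
    have h2: "a + Ln m / 2 \<in> ball (b + Ln m / 2) (ell (Suc m) / 2)" unfolding ab(3)[symmetric] using h .
    show "a = b" using same_level[OF ab(1,2) h h2] .
  qed
  thus ?thesis unfolding Jset_Suc by (simp add: card_image Pn_facts(2))
qed

lemma Jset_ball: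
  assumes "J \<in> Jset n" "1 \<le> n"
  obtains c where "J = ball c (ell n / 2)" "J \<subseteq> {0..Mc}"
proof -
  obtain m where m: "n = Suc m" using assms by (cases n) auto
  show ?thesis using assms that Jset_sub_Comp[of J m] unfolding m Jset_Suc by blast
qed

lemma gfun_J:
  assumes "x \<in> J" "J \<in> Jset n" "1 \<le> n"
  shows "gfun x = 4 / sqrt (measure lebesgue J) * infdist x (frontier J)"
proof -
  have ex: "\<exists>J. \<exists>n\<ge>1. J \<in> Jset n \<and> x \<in> J" using assms by blast
  define J' where "J' = (SOME J. \<exists>n\<ge>1. J \<in> Jset n \<and> x \<in> J)"
  have "\<exists>n\<ge>1. J' \<in> Jset n \<and> x \<in> J'" unfolding J'_def using someI_ex[OF ex] .
  hence "J' = J" using Jdisj[of x J n] assms by blast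
  moreover have "\<exists>n\<ge>1. \<exists>J\<in>Jset n. x \<in> J" using assms by blast
  ultimately show ?thesis unfolding gfun_def J'_def[symmetric] Let_def by simp
qed

lemma gfun_out: "\<not> (\<exists>n\<ge>1. \<exists>J\<in>Jset n. x \<in> J) \<Longrightarrow> gfun x = 0"
  unfolding gfun_def by auto

lemma gfun_tent:
  assumes "J \<in> Jset n" "1 \<le> n" "J = ball c (ell n / 2)" "x \<in> J"
  shows "gfun x = tent c (ell n / 2) x"
proof -
  have r: "ell n / 2 > 0" using ell_pos by simp
  have "gfun x = 4 / sqrt (2 * (ell n / 2)) * (ell n / 2 - \<bar>x - c\<bar>)"
    using gfun_J[OF assms(4,1,2)] unfolding assms(3)
    using measure_ball_real[OF r] infdist_frontier_ball[OF r] assms(4)[unfolded assms(3)] by simp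
  thus ?thesis using assms(4)[unfolded assms(3)] unfolding tent_def by simp
qed

lemma gfun_nonneg: "gfun x \<ge> 0"
proof (cases "\<exists>n\<ge>1. \<exists>J\<in>Jset n. x \<in> J")
  case True
  then obtain n J where nJ: "n \<ge> 1" "J \<in> Jset n" "x \<in> J" by blast
  then obtain c where "J = ball c (ell n / 2)" using Jset_ball by blast
  thus ?thesis using gfun_tent[OF nJ(2,1)] nJ tent_nonneg ell_pos by simp
qed (simp add: gfun_out)

lemma gfun_ge_tent:
  assumes "J \<in> Jset n" "1 \<le> n" "J = ball c (ell n / 2)"
  shows "tent c (ell n / 2) x \<le> gfun x"
proof (cases "x \<in> J")
  case True thus ?thesis using gfun_tent[OF assms] by simp
next
  case False thus ?thesis using gfun_nonneg by (simp add: tent_def assms(3))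
qed

lemma gfun_holder_aux: "gfun x - gfun y \<le> 4 * sqrt \<bar>x - y\<bar>"
proof (cases "\<exists>n\<ge>1. \<exists>J\<in>Jset n. x \<in> J")
  case True
  then obtain n J where nJ: "n \<ge> 1" "J \<in> Jset n" "x \<in> J" by blast
  then obtain c where c: "J = ball c (ell n / 2)" using Jset_ball by blast
  have r: "ell n / 2 > 0" using ell_pos by simp
  have "gfun x - gfun y \<le> tent c (ell n / 2) x - tent c (ell n / 2) y"
    using gfun_tent[OF nJ(2,1) c nJ(3)] gfun_ge_tent[OF nJ(2,1) c, of y] by simp
  also have "\<dots> \<le> 4 * sqrt \<bar>x - y\<bar>" using tent_holder[OF r, of c x y] by simp
  finally show ?thesis .
next
  case False
  have "0 \<le> sqrt \<bar>x - y\<bar>" by simp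
  thus ?thesis using gfun_out[OF False] gfun_nonneg[of y] by linarith
qed

lemma gfun_holder: "holder_continuous_on (1/2) S gfun"
  unfolding holder_continuous_on_def
proof (intro exI[of _ 4] ballI)
  fix x y
  have "\<bar>gfun x - gfun y\<bar> \<le> 4 * sqrt \<bar>x - y\<bar>"
    using gfun_holder_aux[of x y] gfun_holder_aux[of y x] by (simp add: abs_minus_commute)
  thus "\<bar>gfun x - gfun y\<bar> \<le> 4 * \<bar>x - y\<bar> powr (1/2)" by (simp add: powr_half_sqrt)
qed

lemma ell_powr: "ell n powr (3/2) = 1 / 3 ^ n"
proof -
  have qn: "q ^ n = 3 powr (2/3 * real n)"
    unfolding q_def by (simp add: powr_realpow[symmetric] powr_powr)
  have "ell n powr (3/2) = (1 / 3 powr (2/3 * real n)) powr (3/2)" unfolding ell_q qn ..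
  also have "\<dots> = 1 / (3 powr (2/3 * real n)) powr (3/2)" by (simp add: powr_divide)
  also have "(3 powr (2/3 * real n)) powr (3/2) = (3::real) powr (real n)" by (simp add: powr_powr)
  also have "(3::real) powr (real n) = 3 ^ n" by (simp add: powr_realpow)
  finally show ?thesis .
qed

lemma sums_Mc: "(\<lambda>n::nat. 2 ^ n / (3 powr (2/3)) ^ Suc n) sums Mc"
proof -
  have qp: "q > 0" "q - 2 > 0" using q_gt2 by auto
  have "\<bar>2 / q\<bar> < 1" using q_gt2 by simp
  hence "(\<lambda>n. (1 / q) * (2 / q) ^ n) sums ((1 / q) * (1 / (1 - 2 / q)))"
    by (intro sums_mult geometric_sums) (simp add: real_norm_def)
  moreover have "(1 / q) * (1 / (1 - 2 / q)) = Mc" using qp by (simp add: Mc_q field_simps)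
  moreover have "(\<lambda>n. (1 / q) * (2 / q) ^ n) = (\<lambda>n::nat. 2 ^ n / q ^ Suc n)"
    by (simp add: power_divide)
  ultimately show ?thesis unfolding q_def by simp
qed

definition hh :: "real set \<Rightarrow> real \<Rightarrow> real" where
  "hh J x = (if x \<in> J then gfun x else 0)"

lemma hh_tent:
  assumes "J \<in> Jset n" "1 \<le> n" "J = ball c (ell n / 2)"
  shows "hh J x = tent c (ell n / 2) x"
  using gfun_tent[OF assms] assms(3) unfolding hh_def tent_def by auto

lemma hh_int:
  assumes "J \<in> Jset n" "1 \<le> n"
  shows "(hh J has_integral 1 / 3 ^ n) {0..Mc}"
proof -
  obtain c where c: "J = ball c (ell n / 2)" "J \<subseteq> {0..Mc}" using Jset_ball[OF assms] by blast
  have r: "ell n / 2 > 0" using ell_pos by simp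
  have "(tent c (ell n / 2) has_integral (2 * (ell n / 2)) powr (3/2)) (ball c (ell n / 2))"
    by (rule tent_integral_ball[OF r])
  hence "(tent c (ell n / 2) has_integral 1 / 3 ^ n) (ball c (ell n / 2))"
    by (simp add: ell_powr)
  hence "(tent c (ell n / 2) has_integral 1 / 3 ^ n) {0..Mc}"
    by (rule has_integral_on_superset) (use c in \<open>auto simp: tent_def\<close>)
  moreover have "hh J = tent c (ell n / 2)" using hh_tent[OF assms c(1)] by auto
  ultimately show ?thesis by simp
qed

definition G :: "nat \<Rightarrow> real \<Rightarrow> real" where
  "G N x = (\<Sum>n\<in>{1..N}. \<Sum>J\<in>Jset n. hh J x)"

lemma G_int: "(G N has_integral (\<Sum>n\<in>{1..N}. 2 ^ (n - 1) / 3 ^ n)) {0..Mc}"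
proof -
  have "((\<lambda>x. \<Sum>n\<in>{1..N}. \<Sum>J\<in>Jset n. hh J x) has_integral
         (\<Sum>n\<in>{1..N}. \<Sum>J\<in>Jset n. 1 / 3 ^ n)) {0..Mc}"
    by (intro has_integral_sum finite_atLeastAtMost Jset_finite hh_int) auto
  moreover have "(\<Sum>J\<in>Jset n. 1 / 3 ^ n) = (2 ^ (n - 1) / 3 ^ n :: real)" if n_in: "n \<in> {1..N}" for n :: nat
  proof -
    obtain m where m: "n = Suc m" using n_in by (cases n) auto
    show ?thesis unfolding m using Jset_card[of m] by simp
  qed
  ultimately show ?thesis unfolding G_def[abs_def] by simp
qed

lemma G_eq: "G N x = (if \<exists>n\<in>{1..N}. \<exists>J\<in>Jset n. x \<in> J then gfun x else 0)"
proof (cases "\<exists>n\<in>{1..N}. \<exists>J\<in>Jset n. x \<in> J")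
  case True
  then obtain n0 J0 where n0: "n0 \<in> {1..N}" "J0 \<in> Jset n0" "x \<in> J0" by blast
  have hJ: "hh J x = (if n = n0 \<and> J = J0 then gfun x else 0)" if "n \<in> {1..N}" "J \<in> Jset n" for n J
  proof (cases "x \<in> J")
    case True
    have "n = n0 \<and> J = J0" using Jdisj[OF True that(2) n0(3) n0(2)] that(1) n0(1) by simp
    thus ?thesis using True unfolding hh_def by simp
  next
    case False
    hence "\<not> (n = n0 \<and> J = J0)" using n0(3) by blast
    thus ?thesis using False unfolding hh_def by auto
  qed
  have "G N x = (\<Sum>n\<in>{1..N}. \<Sum>J\<in>Jset n. (if n = n0 \<and> J = J0 then gfun x else 0))"
    unfolding G_def using hJ by (intro sum.cong refl) auto
  also have "\<dots> = (\<Sum>n\<in>{1..N}. (if n = n0 then gfun x else 0))"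
  proof (intro sum.cong refl)
    fix n assume "n \<in> {1..N}"
    show "(\<Sum>J\<in>Jset n. (if n = n0 \<and> J = J0 then gfun x else 0)) = (if n = n0 then gfun x else 0)"
      using n0 Jset_finite[of n] by (cases "n = n0") (auto simp: sum.delta)
  qed
  also have "\<dots> = gfun x" using n0 by (simp add: sum.delta)
  finally show ?thesis using True by simp
next
  case False
  hence "hh J x = 0" if "n \<in> {1..N}" "J \<in> Jset n" for n J using that unfolding hh_def by auto
  hence "G N x = 0" unfolding G_def by (intro sum.neutral ballI) simp
  thus ?thesis using False by simp
qed

lemma partial_sum: "(\<Sum>n\<in>{1..N}. 2 ^ (n - 1) / 3 ^ n :: real) = 1 - (2/3) ^ N"
proof (induction N)
  case 0 thus ?case by simp
next
  case (Suc N)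
  have "(\<Sum>n\<in>{1..Suc N}. 2 ^ (n - 1) / 3 ^ n :: real) = (\<Sum>n\<in>{1..N}. 2 ^ (n - 1) / 3 ^ n) + 2 ^ N / 3 ^ Suc N"
    by simp
  also have "\<dots> = 1 - (2/3) ^ N + 2 ^ N / 3 ^ Suc N" using Suc by simp
  also have "\<dots> = 1 - (2/3) ^ Suc N" by (simp add: power_divide field_simps)
  finally show ?case .
qed

lemma gfun_integral: "(gfun has_integral 1) {0..Mc}"
proof -
  have int: "integral {0..Mc} (G k) = 1 - (2/3) ^ k" for k
    using G_int[of k] partial_sum[of k] by (simp add: integral_unique)
  have mono: "G k x \<le> G (Suc k) x" for k x
    unfolding G_eq using gfun_nonneg[of x] by auto
  have lim: "(\<lambda>k. G k x) \<longlonglongrightarrow> gfun x" for x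
  proof (cases "\<exists>n\<ge>1. \<exists>J\<in>Jset n. x \<in> J")
    case True
    then obtain n J where nJ: "n \<ge> 1" "J \<in> Jset n" "x \<in> J" by blast
    have "eventually (\<lambda>k. G k x = gfun x) sequentially"
      unfolding eventually_sequentially
      by (rule exI[of _ n]) (use nJ in \<open>auto simp: G_eq\<close>)
    thus ?thesis by (rule tendsto_eventually)
  next
    case False
    hence "G k x = gfun x" for k using gfun_out[OF False] unfolding G_eq by auto
    thus ?thesis by simp
  qed
  have bnd: "bounded (range (\<lambda>k. integral {0..Mc} (G k)))"
    unfolding bounded_iff int
  proof (intro exI[of _ 1] ballI)
    fix y assume "y \<in> range (\<lambda>k. 1 - (2/3::real) ^ k)"
    then obtain k where "y = 1 - (2/3::real) ^ k" by auto
    moreover have "(2/3::real) ^ k \<le> 1" "0 \<le> (2/3::real) ^ k" by (auto intro: power_le_one)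
    ultimately show "norm y \<le> 1" by simp
  qed
  have mc: "gfun integrable_on {0..Mc} \<and> (\<lambda>k. integral {0..Mc} (G k)) \<longlonglongrightarrow> integral {0..Mc} gfun"
    by (rule monotone_convergence_increasing[OF _ mono lim bnd])
       (use G_int in \<open>auto simp: has_integral_integrable\<close>)
  have "(\<lambda>k. 1 - (2/3::real) ^ k) \<longlonglongrightarrow> 1 - 0"
    by (intro tendsto_diff tendsto_const LIMSEQ_realpow_zero) auto
  moreover have "(\<lambda>k. 1 - (2/3::real) ^ k) \<longlonglongrightarrow> integral {0..Mc} gfun" using mc unfolding int by simp
  ultimately have "integral {0..Mc} gfun = 1" using LIMSEQ_unique by fastforce
  thus ?thesis using mc by (metis has_integral_integral)
qed

lemma level_props:
  assumes "n \<ge> 1" "J \<in> Jset n"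
  shows "(\<exists>x\<in>J. gfun x = 2 * sqrt (measure lebesgue J))
        \<and> (\<forall>x\<in>J. gfun x \<le> 2 * sqrt (measure lebesgue J))
        \<and> (gfun has_integral (measure lebesgue J powr (3/2))) J
        \<and> measure lebesgue J powr (3/2) = 1 / 3 ^ n"
proof -
  obtain c where c: "J = ball c (ell n / 2)" "J \<subseteq> {0..Mc}" using Jset_ball[OF assms(2,1)] by blast
  define r where "r = ell n / 2"
  have r: "r > 0" using ell_pos unfolding r_def by simp
  have meas: "measure lebesgue J = 2 * r" unfolding c(1) r_def[symmetric] by (rule measure_ball_real[OF r])
  have gt: "\<And>x. x \<in> J \<Longrightarrow> gfun x = tent c r x"
    using gfun_tent[OF assms(2,1) c(1)] unfolding r_def by simp
  have "c \<in> J" using r unfolding c(1) r_def[symmetric] by simp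
  moreover have "gfun c = 2 * sqrt (measure lebesgue J)" using gt[OF \<open>c \<in> J\<close>] tent_center[OF r] meas by simp
  moreover have "\<forall>x\<in>J. gfun x \<le> 2 * sqrt (measure lebesgue J)" using gt tent_le[OF r] meas by simp
  moreover have "(gfun has_integral (measure lebesgue J powr (3/2))) J"
  proof -
    have "(tent c r has_integral (2 * r) powr (3/2)) J" using tent_integral_ball[OF r] unfolding c(1) r_def .
    thus ?thesis unfolding meas by (rule has_integral_eq[rotated]) (simp add: gt)
  qed
  moreover have "measure lebesgue J powr (3/2) = 1 / 3 ^ n" unfolding meas r_def using ell_powr by simp
  ultimately show ?thesis by blast
qed

theorem lemma3:
  shows "(\<lambda>n::nat. 2 ^ n / (3 powr (2/3)) ^ Suc n) sums Mc
    \<and> (\<forall>x\<in>{0..Mc}. gfun x \<ge> 0)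
    \<and> (\<forall>n\<ge>1. \<forall>J\<in>Jset n.
          (\<exists>x\<in>J. gfun x = 2 * sqrt (measure lebesgue J))
        \<and> (\<forall>x\<in>J. gfun x \<le> 2 * sqrt (measure lebesgue J)))
    \<and> (\<forall>x\<in>{0..Mc}. gfun x = 0 \<longleftrightarrow> x \<in> Aset)
    \<and> (\<forall>n\<ge>1. \<forall>J\<in>Jset n.
          (gfun has_integral (measure lebesgue J powr (3/2))) J
        \<and> measure lebesgue J powr (3/2) = 1 / 3 ^ n)
    \<and> (gfun has_integral 1) {0..Mc}
    \<and> holder_continuous_on (1/2) {0..Mc} gfun"
proof (intro conjI)
  show "(\<lambda>n::nat. 2 ^ n / (3 powr (2/3)) ^ Suc n) sums Mc" by (rule sums_Mc)
  show "\<forall>x\<in>{0..Mc}. gfun x \<ge> 0" using gfun_nonneg by simp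
  show "\<forall>n\<ge>1. \<forall>J\<in>Jset n. (\<exists>x\<in>J. gfun x = 2 * sqrt (measure lebesgue J))
        \<and> (\<forall>x\<in>J. gfun x \<le> 2 * sqrt (measure lebesgue J))" using level_props by blast
  show "\<forall>n\<ge>1. \<forall>J\<in>Jset n. (gfun has_integral (measure lebesgue J powr (3/2))) J
        \<and> measure lebesgue J powr (3/2) = 1 / 3 ^ n" using level_props by blast
  show "(gfun has_integral 1) {0..Mc}" by (rule gfun_integral)
  show "holder_continuous_on (1/2) {0..Mc} gfun" by (rule gfun_holder)
  show "\<forall>x\<in>{0..Mc}. gfun x = 0 \<longleftrightarrow> x \<in> Aset"
  proof
    fix x :: real assume x: "x \<in> {0..Mc}"
    show "gfun x = 0 \<longleftrightarrow> x \<in> Aset"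
    proof (cases "\<exists>n\<ge>1. \<exists>J\<in>Jset n. x \<in> J")
      case True
      then obtain n J where nJ: "n \<ge> 1" "J \<in> Jset n" "x \<in> J" by blast
      obtain c where c: "J = ball c (ell n / 2)" using Jset_ball[OF nJ(2,1)] by blast
      have "gfun x > 0" using gfun_tent[OF nJ(2,1) c nJ(3)] tent_pos[of "ell n / 2" x c] ell_pos[of n] nJ(3) c
        by simp
      moreover have "x \<notin> Aset" unfolding Aset_def using nJ by auto
      ultimately show ?thesis by simp
    next
      case False
      hence "x \<in> Aset" unfolding Aset_def using x by auto
      thus ?thesis using gfun_out[OF False] by simp
    qed
  qed
qed

end
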